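(* Let $C$ be a finite set of $m$ candidates, $N=\{1,\dots,n\}$ voters with weak orders $\succcurlyeq_1,\dots,\succcurlyeq_n$ over $C$, and $k$ a positive integer. Consider the matrix $A$ whose columns are indexed by variables $x_{i,\ell,r}$ ($i\in N,\ell\in[k],r\in[m]$) and $y_c$ ($c\in C$), with one row for $\sum_{c\in C}y_c=k$ (entry $1$ at each $y_c$) and, for each $i\in N,r\in[m]$, one row for $\sum_{\ell\in[k]}x_{i,\ell,r}-\sum_{c:\ \mathrm{rank}_i(c)\le r}y_c\le0$ (entries $1$ at $x_{i,\ell,r}$ for all $\ell$, $-1$ at $y_c$ for $\mathrm{rank}_i(c)\le r$, $0$ elsewhere). If the profile is single-peaked, then $A$ is totally unimodular.
   Context: A weak order partitions $C$ into indifference classes $A_1\succ\dots\succ A_r$; a candidate in $A_t$ has rank $t$ (rank 1 = most preferred). A top-initial segment is a set $\{x:\mathrm{rank}(x)\le t\}$. A profile is single-peaked if there is a linear order (axis) of $C$ such that every top-initial segment of every voter's order is an interval of the axis. A matrix is totally unimodular if every square submatrix has determinant in $\{-1,0,1\}$. $A$ is the constraint matrix of (OWA-IP), ignoring variable bounds. *)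

theory Defs
  imports "Jordan_Normal_Form.Determinant"
begin

text \<open>A weak order (total preorder) on C, given as a relation "x is weakly preferred to y".\<close>
definition weak_order_on :: "'c set \<Rightarrow> ('c \<Rightarrow> 'c \<Rightarrow> bool) \<Rightarrow> bool" where
  "weak_order_on C R \<longleftrightarrow>
     (\<forall>x\<in>C. \<forall>y\<in>C. R x y \<or> R y x) \<and>
     (\<forall>x\<in>C. \<forall>y\<in>C. \<forall>z\<in>C. R x y \<longrightarrow> R y z \<longrightarrow> R x z)"

definition indiff_class :: "'c set \<Rightarrow> ('c \<Rightarrow> 'c \<Rightarrow> bool) \<Rightarrow> 'c \<Rightarrow> 'c set" where
  "indiff_class C R d = {e \<in> C. R e d \<and> R d e}"

text \<open>Rank of c: c lies in the class A_t where t - 1 classes are strictly above it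
  (rank 1 = most preferred).\<close>
definition rank :: "'c set \<Rightarrow> ('c \<Rightarrow> 'c \<Rightarrow> bool) \<Rightarrow> 'c \<Rightarrow> nat" where
  "rank C R c = card {indiff_class C R d | d. d \<in> C \<and> R d c \<and> \<not> R c d} + 1"

definition top_segment :: "'c set \<Rightarrow> ('c \<Rightarrow> 'c \<Rightarrow> bool) \<Rightarrow> nat \<Rightarrow> 'c set" where
  "top_segment C R t = {x \<in> C. rank C R x \<le> t}"

text \<open>An axis is a linear order of C, given by a bijection onto positions.\<close>
definition axis_interval :: "'c set \<Rightarrow> ('c \<Rightarrow> nat) \<Rightarrow> 'c set \<Rightarrow> bool" where
  "axis_interval C pos S \<longleftrightarrow>
     (\<forall>a\<in>S. \<forall>b\<in>S. \<forall>c\<in>C. pos a \<le> pos c \<and> pos c \<le> pos b \<longrightarrow> c \<in> S)"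

definition single_peaked :: "'c set \<Rightarrow> nat set \<Rightarrow> (nat \<Rightarrow> 'c \<Rightarrow> 'c \<Rightarrow> bool) \<Rightarrow> bool" where
  "single_peaked C N pref \<longleftrightarrow>
     (\<exists>pos. bij_betw pos C {0..<card C} \<and>
        (\<forall>i\<in>N. \<forall>t. axis_interval C pos (top_segment C (pref i) t)))"

text \<open>Total unimodularity of a matrix with rows indexed by the finite set Rs and columns
  by the finite set Cs: every square submatrix (rows/columns chosen injectively, in any order,
  which only affects the sign) has determinant in {-1,0,1}.\<close>
definition totally_unimodular :: "'r set \<Rightarrow> 'v set \<Rightarrow> ('r \<Rightarrow> 'v \<Rightarrow> int) \<Rightarrow> bool" where
  "totally_unimodular Rs Cs M \<longleftrightarrow>
     (\<forall>q f g. inj_on f {0..<q} \<and> f ` {0..<q} \<subseteq> Rs \<and> inj_on g {0..<q} \<and> g ` {0..<q} \<subseteq> Cs \<longrightarrow>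
        det (mat q q (\<lambda>(a, b). M (f a) (g b))) \<in> {-1, 0, 1})"

datatype 'c owa_var = X nat nat nat | Y 'c
datatype owa_row = SumRow | RankRow nat nat

definition owa_cols :: "'c set \<Rightarrow> nat \<Rightarrow> nat \<Rightarrow> 'c owa_var set" where
  "owa_cols C n k = {X i l r | i l r. i \<in> {1..n} \<and> l \<in> {1..k} \<and> r \<in> {1..card C}} \<union> Y ` C"

definition owa_rows :: "'c set \<Rightarrow> nat \<Rightarrow> owa_row set" where
  "owa_rows C n = insert SumRow {RankRow i r | i r. i \<in> {1..n} \<and> r \<in> {1..card C}}"

fun owa_matrix :: "'c set \<Rightarrow> (nat \<Rightarrow> 'c \<Rightarrow> 'c \<Rightarrow> bool) \<Rightarrow> owa_row \<Rightarrow> 'c owa_var \<Rightarrow> int" where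
  "owa_matrix C pref SumRow (X i l r) = 0"
| "owa_matrix C pref SumRow (Y c) = 1"
| "owa_matrix C pref (RankRow i r) (X i' l r') = (if i' = i \<and> r' = r then 1 else 0)"
| "owa_matrix C pref (RankRow i r) (Y c) = (if rank C (pref i) c \<le> r then -1 else 0)"

end

theory Submission
  imports Defs
begin

locale goodm =
  fixes q :: nat and B :: "int mat" and ty :: "nat\<Rightarrow>bool" and p :: "nat\<Rightarrow>nat" and s :: "nat\<Rightarrow>int" and S :: "nat \<Rightarrow> nat set"
  assumes carr: "B \<in> carrier_mat q q"
   and uent: "\<And>b j. b<q \<Longrightarrow> \<not> ty b \<Longrightarrow> j<q \<Longrightarrow> B$$(j,b) \<in> {-1,0,1}"
   and uuniq: "\<And>b j j'. b<q \<Longrightarrow> \<not> ty b \<Longrightarrow> j<q \<Longrightarrow> j'<q \<Longrightarrow> B$$(j,b)\<noteq>0 \<Longrightarrow> B$$(j',b)\<noteq>0 \<Longrightarrow> j = j'"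
   and sgn: "\<And>j. j<q \<Longrightarrow> s j = 1 \<or> s j = -1"
   and yent: "\<And>j b. j<q \<Longrightarrow> b<q \<Longrightarrow> ty b \<Longrightarrow> B$$(j,b) = (if b \<in> S j then s j else 0)"
   and intv: "\<And>j b1 b2 b3. j<q \<Longrightarrow> b1<q \<Longrightarrow> b2<q \<Longrightarrow> b3<q \<Longrightarrow> ty b1 \<Longrightarrow> ty b2 \<Longrightarrow> ty b3 \<Longrightarrow> b1 \<in> S j \<Longrightarrow> b3 \<in> S j \<Longrightarrow> p b1 \<le> p b2 \<Longrightarrow> p b2 \<le> p b3 \<Longrightarrow> b2 \<in> S j"

definition sh :: "nat \<Rightarrow> nat \<Rightarrow> nat" where "sh x y = (if y < x then y else Suc y)"
lemma sh_lt: "x < Suc q \<Longrightarrow> y < q \<Longrightarrow> sh x y < Suc q" by (simp add: sh_def)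
lemma sh_inj: "sh x y = sh x y' \<Longrightarrow> y = y'" by (auto simp: sh_def split: if_splits)

lemma mat_delete_idx: "B \<in> carrier_mat (Suc q) (Suc q) \<Longrightarrow> a < q \<Longrightarrow> c < q \<Longrightarrow>
  mat_delete B i b $$ (a,c) = B $$ (sh i a, sh b c)"
  unfolding mat_delete_def sh_def by auto

lemma minor_goodm:
  assumes g: "goodm (Suc q) B ty p s S" and i: "i < Suc q" and b: "b < Suc q"
  shows "goodm q (mat_delete B i b) (ty \<circ> sh b) (p \<circ> sh b) (s \<circ> sh i) (\<lambda>j. {c. sh b c \<in> S (sh i j)})"
proof -
  interpret G: goodm "Suc q" B ty p s S by (rule g)
  note B = G.carr
  note idx = mat_delete_idx[OF B]
  show ?thesis
  proof (unfold_locales)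
    show "mat_delete B i b \<in> carrier_mat q q" using mat_delete_carrier[OF B] by simp
  next
    fix c j assume "c < q" "\<not> (ty \<circ> sh b) c" "j < q"
    then show "mat_delete B i b $$ (j, c) \<in> {- 1, 0, 1}"
      unfolding idx[OF \<open>j<q\<close> \<open>c<q\<close>] using G.uent[OF sh_lt[OF b] _ sh_lt[OF i]] by simp
  next
    fix c j j' assume "c < q" "\<not> (ty \<circ> sh b) c" "j < q" "j' < q" "mat_delete B i b $$ (j, c) \<noteq> 0" "mat_delete B i b $$ (j', c) \<noteq> 0"
    then have "sh i j = sh i j'"
      unfolding idx[OF \<open>j<q\<close> \<open>c<q\<close>] idx[OF \<open>j'<q\<close> \<open>c<q\<close>]
      using G.uuniq[OF sh_lt[OF b \<open>c<q\<close>] _ sh_lt[OF i \<open>j<q\<close>] sh_lt[OF i \<open>j'<q\<close>]] by simp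
    then show "j = j'" by (rule sh_inj)
  next
    fix j assume "j < q" then show "(s \<circ> sh i) j = 1 \<or> (s \<circ> sh i) j = - 1"
      using G.sgn[OF sh_lt[OF i]] by simp
  next
    fix j c assume "j < q" "c < q" "(ty \<circ> sh b) c"
    then show "mat_delete B i b $$ (j, c) = (if c \<in> {c. sh b c \<in> S (sh i j)} then (s \<circ> sh i) j else 0)"
      unfolding idx[OF \<open>j<q\<close> \<open>c<q\<close>] using G.yent[OF sh_lt[OF i] sh_lt[OF b]] by simp
  next
    fix j b1 b2 b3 assume "j < q" "b1 < q" "b2 < q" "b3 < q" "(ty \<circ> sh b) b1" "(ty \<circ> sh b) b2" "(ty \<circ> sh b) b3"
      "b1 \<in> {c. sh b c \<in> S (sh i j)}" "b3 \<in> {c. sh b c \<in> S (sh i j)}" "(p \<circ> sh b) b1 \<le> (p \<circ> sh b) b2" "(p \<circ> sh b) b2 \<le> (p \<circ> sh b) b3"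
    then show "b2 \<in> {c. sh b c \<in> S (sh i j)}"
      using G.intv[OF sh_lt[OF i \<open>j<q\<close>] sh_lt[OF b \<open>b1<q\<close>] sh_lt[OF b \<open>b2<q\<close>] sh_lt[OF b \<open>b3<q\<close>]] by simp
  qed
qed

lemma expand:
  fixes B :: "int mat"
  assumes B: "B \<in> carrier_mat (Suc q) (Suc q)" and b: "b < Suc q"
    and ent: "\<forall>j<Suc q. B$$(j,b) \<in> {-1,0,1}"
    and uniq: "\<forall>j<Suc q. \<forall>j'<Suc q. B$$(j,b)\<noteq>0 \<longrightarrow> B$$(j',b)\<noteq>0 \<longrightarrow> j = j'"
    and minors: "\<forall>i<Suc q. B$$(i,b) \<noteq> 0 \<longrightarrow> det (mat_delete B i b) \<in> {-1,0,1}"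
  shows "det B \<in> {-1,0,1}"
proof -
  have L: "det B = (\<Sum>i<Suc q. B $$ (i,b) * cofactor B i b)" by (rule laplace_expansion_column[OF B b])
  show ?thesis
  proof (cases "\<exists>i<Suc q. B$$(i,b) \<noteq> 0")
    case False
    then have "det B = 0" unfolding L by (intro sum.neutral) auto
    then show ?thesis by simp
  next
    case True
    then obtain i where i: "i < Suc q" "B$$(i,b) \<noteq> 0" by auto
    have "det B = B $$ (i,b) * cofactor B i b + (\<Sum>x\<in>{..<Suc q} - {i}. B $$ (x,b) * cofactor B x b)"
      unfolding L using i by (intro sum.remove) auto
    moreover have "(\<Sum>x\<in>{..<Suc q} - {i}. B $$ (x,b) * cofactor B x b) = 0"
    proof (intro sum.neutral ballI)
      fix x assume x: "x \<in> {..<Suc q} - {i}"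
      have "B$$(x,b) = 0"
      proof (rule ccontr)
        assume "B$$(x,b) \<noteq> 0"
        then have "x = i" using uniq i x by blast
        then show False using x by simp
      qed
      then show "B $$ (x,b) * cofactor B x b = 0" by simp
    qed
    ultimately have "det B = B $$ (i,b) * cofactor B i b" by simp
    moreover have "B $$ (i,b) \<in> {-1,1}" using ent i by auto
    moreover have "cofactor B i b \<in> {-1,0,1}" using minors i unfolding cofactor_def
      by (cases "even (i+b)") auto
    ultimately show ?thesis by auto
  qed
qed


definition nnz :: "int mat \<Rightarrow> nat" where
  "nnz B = card {(a,c). a < dim_row B \<and> c < dim_col B \<and> B$$(a,c) \<noteq> 0}"

lemma rowop_goodm:
  assumes g: "goodm q B ty p s S" and allty: "\<forall>c<q. ty c"
    and k: "k < q" and j: "j < q" and jk: "j \<noteq> k" and b0: "b0 < q"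
    and b0k: "b0 \<in> S k" and b0j: "b0 \<in> S j" and minp: "\<forall>c<q. p b0 \<le> p c"
    and sub: "\<forall>c<q. c \<in> S k \<longrightarrow> c \<in> S j"
  shows "goodm q (addrow (-(s j * s k)) j k B) ty p s (S(j := S j - S k))"
    and "nnz (addrow (-(s j * s k)) j k B) < nnz B"
proof -
  interpret G: goodm q B ty p s S by (rule g)
  note B = G.carr
  have sk2: "s k * s k = 1" using G.sgn[OF k] by auto
  have ent: "addrow (-(s j * s k)) j k B $$ (a,c) = (if c \<in> (S(j := S j - S k)) a then s a else 0)"
    if a: "a < q" and c: "c < q" for a c
  proof (cases "a = j")
    case True
    have "addrow (-(s j * s k)) j k B $$ (a,c) = -(s j * s k) * B $$ (k,c) + B $$ (j,c)"
      using a c B True by simp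
    also have "\<dots> = (if c \<in> S j - S k then s j else 0)"
    proof -
      have e1: "B $$ (k,c) = (if c \<in> S k then s k else 0)" using G.yent[OF k c] allty c by simp
      have e2: "B $$ (j,c) = (if c \<in> S j then s j else 0)" using G.yent[OF j c] allty c by simp
      have "-(s j * s k) * s k = - s j * (s k * s k)" by (simp only: mult.assoc mult_minus_left)
      then have "-(s j * s k) * s k = - s j" using sk2 by simp
      then have m: "-(s j * s k) * s k + s j = 0" by simp
      show ?thesis
      proof (cases "c \<in> S k")
        case True
        then have "c \<in> S j" using sub c by blast
        then show ?thesis unfolding e1 e2 using True m by simp
      next
        case False
        then show ?thesis unfolding e1 e2 by simp
      qed
    qed
    finally show ?thesis using True by simp
  next
    case False
    then show ?thesis using a c B G.yent[OF a c] allty by simp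
  qed
  show "goodm q (addrow (-(s j * s k)) j k B) ty p s (S(j := S j - S k))"
  proof (unfold_locales)
    show "addrow (-(s j * s k)) j k B \<in> carrier_mat q q" using B by simp
  next
    fix b a assume "b < q" "\<not> ty b" then show "addrow (-(s j * s k)) j k B $$ (a, b) \<in> {- 1, 0, 1}"
      using allty by simp
  next
    fix b a a' assume "b < q" "\<not> ty b" then show "a = a'"
      using allty by simp
  next
    fix a assume "a < q" then show "s a = 1 \<or> s a = -1" by (rule G.sgn)
  next
    fix a c assume "a < q" "c < q" "ty c" then show "addrow (-(s j * s k)) j k B $$ (a, c) = (if c \<in> (S(j := S j - S k)) a then s a else 0)"
      using ent[OF \<open>a<q\<close> \<open>c<q\<close>] by simp
  next
    fix a b1 b2 b3 assume h: "a < q" "b1 < q" "b2 < q" "b3 < q" "ty b1" "ty b2" "ty b3"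
      "b1 \<in> (S(j := S j - S k)) a" "b3 \<in> (S(j := S j - S k)) a" "p b1 \<le> p b2" "p b2 \<le> p b3"
    show "b2 \<in> (S(j := S j - S k)) a"
    proof (cases "a = j")
      case False then show ?thesis using h G.intv[of a b1 b2 b3] by simp
    next
      case True
      have "b2 \<in> S j" using h True G.intv[OF j, of b1 b2 b3] by simp
      moreover have "b2 \<notin> S k"
      proof
        assume "b2 \<in> S k"
        then have "b1 \<in> S k" using G.intv[OF k b0 \<open>b1<q\<close> \<open>b2<q\<close>] allty b0 b0k minp h by simp
        then show False using h True by simp
      qed
      ultimately show ?thesis using True by simp
    qed
  qed
  define B' where "B' = addrow (-(s j * s k)) j k B"
  have dB: "dim_row B = q" "dim_col B = q" using B by auto
  have dB': "dim_row B' = q" "dim_col B' = q" using B unfolding B'_def by auto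
  define N' where "N' = {(a,c). a < q \<and> c < q \<and> B'$$(a,c) \<noteq> 0}"
  define N where "N = {(a,c). a < q \<and> c < q \<and> B$$(a,c) \<noteq> 0}"
  have nB: "nnz B = card N" unfolding nnz_def N_def dB by simp
  have nB': "nnz B' = card N'" unfolding nnz_def N'_def dB' by simp
  have sub1: "N' \<subseteq> N"
  proof
    fix x assume "x \<in> N'"
    then obtain a c where x: "x = (a,c)" "a < q" "c < q" "B' $$ (a,c) \<noteq> 0" unfolding N'_def by blast
    then have "c \<in> (S(j := S j - S k)) a" using ent[OF x(2,3)] x(4) unfolding B'_def by (auto split: if_splits)
    then have "c \<in> S a" by (auto split: if_splits)
    moreover have "ty c" using allty x(3) by simp
    ultimately have "B $$ (a,c) = s a" using G.yent[OF x(2,3)] by simp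
    then have "B $$ (a,c) \<noteq> 0" using G.sgn[OF x(2)] by auto
    then show "x \<in> N" using x unfolding N_def by blast
  qed
  have "B $$ (j,b0) = s j" using G.yent[OF j b0] allty b0 b0j by simp
  then have "B $$ (j,b0) \<noteq> 0" using G.sgn[OF j] by auto
  then have i1: "(j,b0) \<in> N" unfolding N_def using j b0 by blast
  have "B' $$ (j,b0) = 0" using ent[OF j b0] b0k unfolding B'_def by simp
  then have i2: "(j,b0) \<notin> N'" unfolding N'_def by blast
  have fin: "finite N" unfolding N_def by (rule finite_subset[of _ "{..<q} \<times> {..<q}"]) auto
  have "card N' < card N" by (rule psubset_card_mono[OF fin]) (use sub1 i1 i2 in blast)
  then show "nnz (addrow (-(s j * s k)) j k B) < nnz B" using nB nB' unfolding B'_def by simp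
qed

lemma core: "goodm q B ty p s S \<Longrightarrow> det B \<in> {-1,0,1}"
proof (induction q arbitrary: B ty p s S)
  case 0
  then have "B \<in> carrier_mat 0 0" using goodm.carr by blast
  then show ?case by simp
next
  case (Suc q)
  {
    fix m
    have "\<forall>B S. nnz B = m \<longrightarrow> goodm (Suc q) B ty p s S \<longrightarrow> det B \<in> {-1,0,1}"
    proof (induction m rule: less_induct)
      case (less m)
      show ?case
      proof (intro allI impI)
        fix B S assume nm: "nnz B = m" and g: "goodm (Suc q) B ty p s S"
        interpret G: goodm "Suc q" B ty p s S by (rule g)
        have minors: "det (mat_delete B i b) \<in> {-1,0,1}" if "i < Suc q" "b < Suc q" for i b
          by (rule Suc.IH[OF minor_goodm[OF g that]])
        show "det B \<in> {-1,0,1}"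
        proof (cases "\<exists>b<Suc q. \<not> ty b")
          case True
          then obtain b where b: "b<Suc q" "\<not> ty b" by blast
          show ?thesis
          proof (rule expand[OF G.carr b(1)])
            show "\<forall>j<Suc q. B $$ (j, b) \<in> {- 1, 0, 1}" using G.uent[OF b] by blast
            show "\<forall>j<Suc q. \<forall>j'<Suc q. B $$ (j, b) \<noteq> 0 \<longrightarrow> B $$ (j', b) \<noteq> 0 \<longrightarrow> j = j'"
              using G.uuniq[OF b] by blast
            show "\<forall>i<Suc q. B $$ (i, b) \<noteq> 0 \<longrightarrow> det (mat_delete B i b) \<in> {- 1, 0, 1}"
              using minors b(1) by blast
          qed
        next
          case False
          hence allty: "\<forall>c<Suc q. ty c" by blast
          obtain b0 where b0: "b0 < Suc q" and minp: "\<forall>c<Suc q. p b0 \<le> p c"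
          proof -
            have "Min (p ` {..<Suc q}) \<in> p ` {..<Suc q}" by (rule Min_in) auto
            then obtain b0 where "b0 < Suc q" "p b0 = Min (p ` {..<Suc q})" by auto
            moreover have "\<forall>c<Suc q. Min (p ` {..<Suc q}) \<le> p c" by (auto intro: Min_le)
            ultimately show ?thesis using that by auto
          qed
          have ent0: "B $$ (j,b0) = (if b0 \<in> S j then s j else 0)" if "j < Suc q" for j
            using G.yent[OF that b0] allty b0 by simp
          show ?thesis
          proof (cases "\<forall>j<Suc q. \<forall>j'<Suc q. b0 \<in> S j \<longrightarrow> b0 \<in> S j' \<longrightarrow> j = j'")
            case True
            show ?thesis
            proof (rule expand[OF G.carr b0])
              show "\<forall>j<Suc q. B $$ (j, b0) \<in> {- 1, 0, 1}"
              proof (intro allI impI)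
                fix j assume j: "j < Suc q"
                show "B $$ (j, b0) \<in> {- 1, 0, 1}" unfolding ent0[OF j] using G.sgn[OF j] by auto
              qed
              show "\<forall>j<Suc q. \<forall>j'<Suc q. B $$ (j, b0) \<noteq> 0 \<longrightarrow> B $$ (j', b0) \<noteq> 0 \<longrightarrow> j = j'"
              proof (intro allI impI)
                fix j j' assume j: "j < Suc q" "j' < Suc q" "B $$ (j, b0) \<noteq> 0" "B $$ (j', b0) \<noteq> 0"
                then have "b0 \<in> S j" "b0 \<in> S j'" using ent0 by (auto split: if_splits)
                then show "j = j'" using True j by blast
              qed
              show "\<forall>i<Suc q. B $$ (i, b0) \<noteq> 0 \<longrightarrow> det (mat_delete B i b0) \<in> {- 1, 0, 1}"
                using minors b0 by blast
            qed
          next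
            case False
            then obtain j1 j2 where j12: "j1<Suc q" "j2<Suc q" "b0\<in>S j1" "b0\<in>S j2" "j1\<noteq>j2" by blast
            define R where "R = {j. j<Suc q \<and> b0 \<in> S j}"
            define cs where "cs = (\<lambda>j. card (S j \<inter> {..<Suc q}))"
            have finR: "finite R" unfolding R_def by simp
            have j1R: "j1 \<in> R" using j12 unfolding R_def by simp
            obtain k where k: "k \<in> R" and kmin: "\<forall>j\<in>R. cs k \<le> cs j"
            proof -
              have "Min (cs ` R) \<in> cs ` R" by (rule Min_in) (use finR j1R in auto)
              then obtain k where "k \<in> R" "cs k = Min (cs ` R)" by auto
              moreover have "\<forall>j\<in>R. Min (cs ` R) \<le> cs j" using finR by (auto intro: Min_le)
              ultimately show ?thesis using that by auto
            qed
            obtain j where j: "j \<in> R" "j \<noteq> k"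
            proof (cases "j1 = k")
              case True then show ?thesis using that[of j2] j12 unfolding R_def by simp
            next
              case False then show ?thesis using that[of j1] j1R by simp
            qed
            have kq: "k < Suc q" and b0k: "b0 \<in> S k" using k unfolding R_def by auto
            have jq: "j < Suc q" and b0j: "b0 \<in> S j" using j unfolding R_def by auto
            have sub: "\<forall>c<Suc q. c \<in> S k \<longrightarrow> c \<in> S j"
            proof (intro allI impI, rule ccontr)
              fix c assume c: "c < Suc q" "c \<in> S k" "c \<notin> S j"
              have ss: "S j \<inter> {..<Suc q} \<subseteq> S k \<inter> {..<Suc q}"
              proof
                fix d assume d: "d \<in> S j \<inter> {..<Suc q}"
                then have dq: "d < Suc q" and dS: "d \<in> S j" by auto
                show "d \<in> S k \<inter> {..<Suc q}"
                proof (cases "p d \<le> p c")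
                  case True
                  have "d \<in> S k" using G.intv[OF kq b0 dq c(1)] allty b0 dq c b0k minp True by simp
                  then show ?thesis using dq by simp
                next
                  case False
                  have "c \<in> S j" using G.intv[OF jq b0 c(1) dq] allty b0 dq c b0j dS minp False by simp
                  then show ?thesis using c by simp
                qed
              qed
              have "c \<in> S k \<inter> {..<Suc q}" "c \<notin> S j \<inter> {..<Suc q}" using c by auto
              then have "S j \<inter> {..<Suc q} \<subset> S k \<inter> {..<Suc q}" using ss by blast
              then have "cs j < cs k" unfolding cs_def by (rule psubset_card_mono[rotated]) simp
              then show False using kmin j(1) by force
            qed
            have jk: "j \<noteq> k" by (rule j(2))
            note R = rowop_goodm[OF g allty kq jq jk b0 b0k b0j minp sub]
            have "det (addrow (-(s j * s k)) j k B) \<in> {-1,0,1}"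
              using less.IH[OF R(2)[unfolded nm]] R(1) by blast
            moreover have "det (addrow (-(s j * s k)) j k B) = det B"
              by (rule det_addrow[OF kq jk G.carr])
            ultimately show ?thesis by simp
          qed
        qed
      qed
    qed
  }
  then show ?case using Suc.prems by blast
qed


lemma Y_in_cols: "Y c \<in> owa_cols C n k \<Longrightarrow> c \<in> C"
  unfolding owa_cols_def by auto

lemma Rank_in_rows: "RankRow i r \<in> owa_rows C n \<Longrightarrow> i \<in> {1..n}"
  unfolding owa_rows_def by auto

theorem mainTheorem7:
  fixes C :: "'c set" and n k :: nat and pref :: "nat \<Rightarrow> 'c \<Rightarrow> 'c \<Rightarrow> bool"
  assumes "finite C"
    and "\<forall>i\<in>{1..n}. weak_order_on C (pref i)"
    and "k > 0"
    and "single_peaked C {1..n} pref"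
  shows "totally_unimodular (owa_rows C n) (owa_cols C n k) (owa_matrix C pref)"
  unfolding totally_unimodular_def
proof (intro allI impI)
  fix q and f :: "nat \<Rightarrow> owa_row" and g :: "nat \<Rightarrow> 'c owa_var"
  assume "inj_on f {0..<q} \<and> f ` {0..<q} \<subseteq> owa_rows C n \<and> inj_on g {0..<q} \<and> g ` {0..<q} \<subseteq> owa_cols C n k"
  then have injf: "inj_on f {0..<q}" and fR: "\<And>a. a < q \<Longrightarrow> f a \<in> owa_rows C n"
    and gC: "\<And>b. b < q \<Longrightarrow> g b \<in> owa_cols C n k" by auto
  obtain pos where SP: "\<forall>i\<in>{1..n}. \<forall>t. axis_interval C pos (top_segment C (pref i) t)"
    using assms(4) unfolding single_peaked_def by blast
  define M where "M = mat q q (\<lambda>(a, b). owa_matrix C pref (f a) (g b))"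
  define ty where "ty = (\<lambda>b. case g b of Y c \<Rightarrow> True | X _ _ _ \<Rightarrow> False)"
  define p where "p = (\<lambda>b. case g b of Y c \<Rightarrow> pos c | X _ _ _ \<Rightarrow> 0)"
  define s :: "nat \<Rightarrow> int" where "s = (\<lambda>a. case f a of SumRow \<Rightarrow> 1 | RankRow _ _ \<Rightarrow> -1)"
  define S where "S = (\<lambda>a. {b. case g b of Y c \<Rightarrow> (case f a of SumRow \<Rightarrow> True | RankRow i r \<Rightarrow> rank C (pref i) c \<le> r) | X _ _ _ \<Rightarrow> False})"
  have Mi: "M $$ (a,b) = owa_matrix C pref (f a) (g b)" if "a < q" "b < q" for a b
    unfolding M_def using that by simp
  have "goodm q M ty p s S"
  proof (unfold_locales)
    show "M \<in> carrier_mat q q" unfolding M_def by simp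
  next
    fix b j assume b: "b < q" "\<not> ty b" "j < q"
    then obtain i l r where gb: "g b = X i l r" unfolding ty_def by (cases "g b") auto
    show "M $$ (j,b) \<in> {-1,0,1}" unfolding Mi[OF b(3) b(1)] gb by (cases "f j") auto
  next
    fix b j j' assume b: "b < q" "\<not> ty b" "j < q" "j' < q" "M $$ (j,b) \<noteq> 0" "M $$ (j',b) \<noteq> 0"
    then obtain i l r where gb: "g b = X i l r" unfolding ty_def by (cases "g b") auto
    have "f j = RankRow i r" using b(5) unfolding Mi[OF b(3) b(1)] gb
      by (cases "f j") (auto split: if_splits)
    moreover have "f j' = RankRow i r" using b(6) unfolding Mi[OF b(4) b(1)] gb
      by (cases "f j'") (auto split: if_splits)
    ultimately show "j = j'" using injf b(3,4) by (metis atLeastLessThan_iff inj_onD zero_le)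
  next
    fix j assume "j < q" then show "s j = 1 \<or> s j = -1" unfolding s_def by (cases "f j") auto
  next
    fix j b assume jb: "j < q" "b < q" "ty b"
    then obtain c where gb: "g b = Y c" unfolding ty_def by (cases "g b") auto
    show "M $$ (j,b) = (if b \<in> S j then s j else 0)"
      unfolding Mi[OF jb(1,2)] gb S_def s_def by (cases "f j") (auto simp: gb)
  next
    fix j b1 b2 b3 assume h: "j < q" "b1 < q" "b2 < q" "b3 < q" "ty b1" "ty b2" "ty b3"
      "b1 \<in> S j" "b3 \<in> S j" "p b1 \<le> p b2" "p b2 \<le> p b3"
    obtain c1 where g1: "g b1 = Y c1" using h(5) unfolding ty_def by (cases "g b1") auto
    obtain c2 where g2: "g b2 = Y c2" using h(6) unfolding ty_def by (cases "g b2") auto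
    obtain c3 where g3: "g b3 = Y c3" using h(7) unfolding ty_def by (cases "g b3") auto
    have c1C: "c1 \<in> C" using gC[OF h(2)] g1 by (simp add: Y_in_cols)
    have c2C: "c2 \<in> C" using gC[OF h(3)] g2 by (simp add: Y_in_cols)
    have c3C: "c3 \<in> C" using gC[OF h(4)] g3 by (simp add: Y_in_cols)
    show "b2 \<in> S j"
    proof (cases "f j")
      case SumRow then show ?thesis unfolding S_def using g2 by simp
    next
      case (RankRow i r)
      have i: "i \<in> {1..n}" using fR[OF h(1)] RankRow using Rank_in_rows by metis
      have "c1 \<in> top_segment C (pref i) r" using h(8) c1C unfolding S_def top_segment_def using g1 RankRow by simp
      moreover have "c3 \<in> top_segment C (pref i) r" using h(9) c3C unfolding S_def top_segment_def using g3 RankRow by simp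
      moreover have "pos c1 \<le> pos c2" "pos c2 \<le> pos c3" using h(10,11) unfolding p_def g1 g2 g3 by simp_all
      ultimately have "c2 \<in> top_segment C (pref i) r"
        using SP i c2C unfolding axis_interval_def by blast
      then show ?thesis unfolding S_def top_segment_def using g2 RankRow by simp
    qed
  qed
  then show "det (mat q q (\<lambda>(a, b). owa_matrix C pref (f a) (g b))) \<in> {-1, 0, 1}"
    using core unfolding M_def by blast
qed

end
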